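(* Let $G$ be an interval graph with a fixed interval representation, and let $P_1,\ldots,P_\ell$ be a solution of an instance of \textsc{Requirement Induced Disjoint Paths} on $G$ with terminal pairs $(s_1,t_1),\ldots,(s_k,t_k)$. For each $P_a$ that has at least one inner vertex, let $I_{P_a}$ be the union of the intervals of the inner vertices of $P_a$, and say $I_{P_a}$ has color $i$ if $P_a$ joins the vertices representing $s_i$ and $t_i$. Then: (i) for every $i$, every $I_{P_a}$ of color $i$ intersects the intervals of the vertices representing $s_i$ and $t_i$, and intersects no interval of any other terminal vertex; (ii) for distinct $a,b$ (with $P_a,P_b$ having inner vertices), $I_{P_a}\cap I_{P_b}=\emptyset$; (iii) for colors $i\neq j$, there is no interval $I_{P_c}$ of color $j$ that lies between two intervals $I_{P_a},I_{P_b}$ of color $i$.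
   Context: All graphs are finite, undirected, without loops or multiple edges. For a path $P=v_1\cdots v_r$, the vertices $v_1,v_r$ are its ends and $v_2,\ldots,v_{r-1}$ its inner vertices. An edge $v_iv_j$ with $i+1<j$ is an inner chord of $P$ if $v_i$ or $v_j$ is an inner vertex of $P$. Distinct paths $P_1,\ldots,P_\ell$ are mutually induced if (i) no $P_i$ has an inner chord; (ii) two distinct paths $P_i,P_j$ share only vertices that are ends of both paths; (iii) no inner vertex $u$ of some $P_i$ is adjacent to a vertex $v$ of some $P_j$ with $j\neq i$, unless $v$ is an end of both $P_i$ and $P_j$. \textsc{Requirement Induced Disjoint Paths}: the input is a graph $G$, $k$ terminal pairs $(s_1,t_1),\ldots,(s_k,t_k)$ and positive integers $r_1,\ldots,r_k$. Each terminal is placed on ("represented by") a vertex of $G$ (a terminal vertex); several terminals may be represented by the same vertex, but $s_i$ and $t_i$ are represented by distinct vertices, and the unordered pairs of representing vertices are pairwise distinct for different $i$. A solution is a family of $\ell=r_1+\cdots+r_k$ mutually induced paths such that, for each $i$, exactly $r_i$ of them join the vertex representing $s_i$ and the vertex representing $t_i$. An interval representation assigns each vertex $u$ an interval $[l_u,r_u]$ of the real line, all endpoints being distinct integers, such that two vertices are adjacent iff their intervals intersect. For intervals (or unions of intervals that are intervals) $X,Y,Z$, $Z$ lies between $X$ and $Y$ if the right end-point of $X$ is smaller than the left end-point of $Z$ and the right end-point of $Z$ is smaller than the left end-point of $Y$. *)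

theory Defs
  imports Complex_Main
begin

definition graph :: "'a set \<Rightarrow> ('a \<Rightarrow> 'a \<Rightarrow> bool) \<Rightarrow> bool" where
  "graph V E \<longleftrightarrow> finite V \<and> (\<forall>u v. E u v \<longrightarrow> u \<in> V \<and> v \<in> V \<and> u \<noteq> v)
     \<and> (\<forall>u v. E u v \<longrightarrow> E v u)"

definition interval :: "('a \<Rightarrow> int) \<Rightarrow> ('a \<Rightarrow> int) \<Rightarrow> 'a \<Rightarrow> real set" where
  "interval lp rp u = {real_of_int (lp u) .. real_of_int (rp u)}"

definition interval_rep :: "'a set \<Rightarrow> ('a \<Rightarrow> 'a \<Rightarrow> bool) \<Rightarrow> ('a \<Rightarrow> int) \<Rightarrow> ('a \<Rightarrow> int) \<Rightarrow> bool" where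
  "interval_rep V E lp rp \<longleftrightarrow>
     (\<forall>u\<in>V. lp u < rp u) \<and>
     (\<forall>u\<in>V. \<forall>v\<in>V. u \<noteq> v \<longrightarrow> lp u \<noteq> lp v \<and> rp u \<noteq> rp v \<and> lp u \<noteq> rp v) \<and>
     (\<forall>u\<in>V. \<forall>v\<in>V. u \<noteq> v \<longrightarrow> (E u v \<longleftrightarrow> interval lp rp u \<inter> interval lp rp v \<noteq> {}))"

definition is_path :: "'a set \<Rightarrow> ('a \<Rightarrow> 'a \<Rightarrow> bool) \<Rightarrow> 'a list \<Rightarrow> bool" where
  "is_path V E P \<longleftrightarrow> P \<noteq> [] \<and> distinct P \<and> set P \<subseteq> V \<and>
     (\<forall>i. Suc i < length P \<longrightarrow> E (P ! i) (P ! Suc i))"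

definition ends :: "'a list \<Rightarrow> 'a set" where
  "ends P = {hd P, last P}"

definition inner :: "'a list \<Rightarrow> 'a set" where
  "inner P = set (butlast (tl P))"

definition no_inner_chord :: "('a \<Rightarrow> 'a \<Rightarrow> bool) \<Rightarrow> 'a list \<Rightarrow> bool" where
  "no_inner_chord E P \<longleftrightarrow>
     (\<forall>i j. i + 1 < j \<and> j < length P \<and> (P ! i \<in> inner P \<or> P ! j \<in> inner P)
        \<longrightarrow> \<not> E (P ! i) (P ! j))"

definition mutually_induced :: "('a \<Rightarrow> 'a \<Rightarrow> bool) \<Rightarrow> nat \<Rightarrow> (nat \<Rightarrow> 'a list) \<Rightarrow> bool" where
  "mutually_induced E l Ps \<longleftrightarrow>
     (\<forall>a<l. \<forall>b<l. a \<noteq> b \<longrightarrow> Ps a \<noteq> Ps b \<and> Ps a \<noteq> rev (Ps b)) \<and>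
     (\<forall>a<l. no_inner_chord E (Ps a)) \<and>
     (\<forall>a<l. \<forall>b<l. a \<noteq> b \<longrightarrow> set (Ps a) \<inter> set (Ps b) \<subseteq> ends (Ps a) \<inter> ends (Ps b)) \<and>
     (\<forall>a<l. \<forall>b<l. a \<noteq> b \<longrightarrow>
        (\<forall>u\<in>inner (Ps a). \<forall>v\<in>set (Ps b). E u v \<longrightarrow> v \<in> ends (Ps a) \<inter> ends (Ps b)))"

definition joins :: "'a list \<Rightarrow> 'a \<Rightarrow> 'a \<Rightarrow> bool" where
  "joins P x y \<longleftrightarrow> P \<noteq> [] \<and> ((hd P = x \<and> last P = y) \<or> (hd P = y \<and> last P = x))"

text \<open>Instance of Requirement Induced Disjoint Paths: s i, t i are the vertices
  representing the terminals s_i, t_i (i < k); r i the requirements.\<close>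
definition rip_instance :: "'a set \<Rightarrow> nat \<Rightarrow> (nat \<Rightarrow> 'a) \<Rightarrow> (nat \<Rightarrow> 'a) \<Rightarrow> (nat \<Rightarrow> nat) \<Rightarrow> bool" where
  "rip_instance V k s t r \<longleftrightarrow>
     (\<forall>i<k. s i \<in> V \<and> t i \<in> V \<and> s i \<noteq> t i \<and> 0 < r i) \<and>
     (\<forall>i<k. \<forall>j<k. i \<noteq> j \<longrightarrow> {s i, t i} \<noteq> {s j, t j})"

definition rip_solution :: "'a set \<Rightarrow> ('a \<Rightarrow> 'a \<Rightarrow> bool) \<Rightarrow> nat \<Rightarrow> (nat \<Rightarrow> 'a) \<Rightarrow> (nat \<Rightarrow> 'a)
    \<Rightarrow> (nat \<Rightarrow> nat) \<Rightarrow> (nat \<Rightarrow> 'a list) \<Rightarrow> bool" where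
  "rip_solution V E k s t r Ps \<longleftrightarrow>
     (\<forall>a<(\<Sum>i<k. r i). is_path V E (Ps a)) \<and>
     mutually_induced E (\<Sum>i<k. r i) Ps \<and>
     (\<forall>i<k. card {a. a < (\<Sum>i<k. r i) \<and> joins (Ps a) (s i) (t i)} = r i)"

definition inner_union :: "('a \<Rightarrow> int) \<Rightarrow> ('a \<Rightarrow> int) \<Rightarrow> 'a list \<Rightarrow> real set" where
  "inner_union lp rp P = (\<Union>u\<in>inner P. interval lp rp u)"

definition lies_between :: "real set \<Rightarrow> real set \<Rightarrow> real set \<Rightarrow> bool" where
  "lies_between Z X Y \<longleftrightarrow> Sup X < Inf Z \<and> Sup Z < Inf Y"

end

theory Submission
  imports Defs
begin

lemma inner_not_end:
  assumes "distinct P" "u \<in> inner P" shows "u \<notin> ends P"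
proof -
  obtain x xs where P: "P = x # xs" using assms(2) unfolding inner_def by (cases P) auto
  have ux: "u \<in> set (butlast xs)" using assms(2) P unfolding inner_def by simp
  hence ne: "xs \<noteq> []" by auto
  have "u \<noteq> x" using assms(1) P ux by (meson distinct.simps(2) in_set_butlastD)
  moreover have "u \<noteq> last xs"
  proof
    assume "u = last xs"
    have "distinct (butlast xs @ [last xs])" using assms(1) P ne by (simp add: append_butlast_last_id)
    thus False using ux \<open>u = last xs\<close> by simp
  qed
  ultimately show ?thesis using P ne unfolding ends_def by auto
qed

lemma inner_sub: "inner P \<subseteq> set P"
  unfolding inner_def by (metis in_set_butlastD list.set_sel(2) subsetI tl_Nil list.set(1) empty_iff)

lemma inner_first:
  assumes "is_path V E P" "inner P \<noteq> {}"
  shows "\<exists>u\<in>inner P. E (hd P) u"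
proof -
  have "length (butlast (tl P)) > 0" using assms(2) unfolding inner_def by (metis length_greater_0_conv set_empty)
  moreover have "length (butlast (tl P)) = length P - 2" by simp
  ultimately have n3: "length P \<ge> 3" by linarith
  then obtain x y zs where P: "P = x # y # zs" "zs \<noteq> []"
  proof -
    have "\<exists>x y zs. P = x # y # zs \<and> zs \<noteq> []"
    proof (cases P)
      case (Cons x xs)
      then show ?thesis using n3 by (cases xs) auto
    qed (use n3 in auto)
    thus ?thesis using that by blast
  qed
  have "E (P!0) (P!Suc 0)" using assms(1) P unfolding is_path_def by auto
  moreover have "y \<in> inner P" using P unfolding inner_def by (cases zs) auto
  ultimately show ?thesis using P by auto
qed

lemma inner_last:
  assumes "is_path V E P" "inner P \<noteq> {}"
  shows "\<exists>u\<in>inner P. E u (last P)"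
proof -
  define n where "n = length P"
  have "length (butlast (tl P)) > 0" using assms(2) unfolding inner_def by (metis length_greater_0_conv set_empty)
  moreover have "length (butlast (tl P)) = length P - 2" by simp
  ultimately have n3: "n \<ge> 3" unfolding n_def by linarith
  have "E (P!(n-2)) (P!Suc (n-2))" using assms(1) n3 unfolding is_path_def n_def by auto
  moreover have "Suc (n-2) = n - 1" using n3 by simp
  moreover have "last P = P!(n-1)" using n3 n_def by (metis last_conv_nth list.size(3) not_numeral_le_zero)
  moreover have "P!(n-2) \<in> inner P"
  proof -
    have "butlast (tl P) ! (n-3) = P!(n-2)" using n3 n_def
      by (simp add: nth_butlast nth_tl Suc_diff_Suc numeral_3_eq_3 numeral_2_eq_2)
    moreover have "n - 3 < length (butlast (tl P))" using n3 n_def by simp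
    ultimately show ?thesis unfolding inner_def by (metis nth_mem)
  qed
  ultimately show ?thesis by metis
qed

lemma disj:
  assumes g: "graph V E" and ir: "interval_rep V E lp rp"
    and pa: "is_path V E Pa" and pb: "is_path V E Pb"
    and m1: "set Pa \<inter> set Pb \<subseteq> ends Pa \<inter> ends Pb"
    and m2: "\<forall>u\<in>inner Pa. \<forall>v\<in>set Pb. E u v \<longrightarrow> v \<in> ends Pa \<inter> ends Pb"
    and u: "u \<in> inner Pa" and v: "v \<in> set Pb" and ve: "v \<notin> ends Pa"
  shows "interval lp rp u \<inter> interval lp rp v = {}"
proof (rule ccontr)
  assume ne: "interval lp rp u \<inter> interval lp rp v \<noteq> {}"
  have ua: "u \<in> set Pa" using inner_sub[of Pa] u by blast
  have une: "u \<notin> ends Pa" using inner_not_end[of Pa u] pa u unfolding is_path_def by blast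
  have "u \<noteq> v" using m1 ua v une by blast
  moreover have "u \<in> V" "v \<in> V" using ua v pa pb unfolding is_path_def by auto
  ultimately have "E u v" using ir ne unfolding interval_rep_def by blast
  thus False using m2 u v ve by blast
qed

lemma ends_sub: "P \<noteq> [] \<Longrightarrow> ends P \<subseteq> set P"
  unfolding ends_def by auto

lemma joins_ends: "joins P x y \<Longrightarrow> ends P = {x, y}"
  unfolding joins_def ends_def by auto

lemma int_ne: "interval_rep V E lp rp \<Longrightarrow> graph V E \<Longrightarrow> E u v \<Longrightarrow> interval lp rp u \<inter> interval lp rp v \<noteq> {}"
  unfolding interval_rep_def graph_def by blast

lemma bdd_iu: "bdd_above (inner_union lp rp P) \<and> bdd_below (inner_union lp rp P)"
  unfolding inner_union_def inner_def interval_def by simp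

theorem lemma1:
  fixes V :: "'a set" and E :: "'a \<Rightarrow> 'a \<Rightarrow> bool" and lp rp :: "'a \<Rightarrow> int"
    and k :: nat and s t :: "nat \<Rightarrow> 'a" and r :: "nat \<Rightarrow> nat" and Ps :: "nat \<Rightarrow> 'a list"
  assumes "graph V E"
    and "interval_rep V E lp rp"
    and "rip_instance V k s t r"
    and "rip_solution V E k s t r Ps"
  shows "(\<forall>i<k. \<forall>a<(\<Sum>i<k. r i). joins (Ps a) (s i) (t i) \<and> inner (Ps a) \<noteq> {} \<longrightarrow>
            inner_union lp rp (Ps a) \<inter> interval lp rp (s i) \<noteq> {} \<and>
            inner_union lp rp (Ps a) \<inter> interval lp rp (t i) \<noteq> {} \<and>
            (\<forall>v \<in> s ` {..<k} \<union> t ` {..<k}. v \<noteq> s i \<and> v \<noteq> t i \<longrightarrow>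
               inner_union lp rp (Ps a) \<inter> interval lp rp v = {}))
       \<and> (\<forall>a<(\<Sum>i<k. r i). \<forall>b<(\<Sum>i<k. r i). a \<noteq> b \<and> inner (Ps a) \<noteq> {} \<and> inner (Ps b) \<noteq> {} \<longrightarrow>
            inner_union lp rp (Ps a) \<inter> inner_union lp rp (Ps b) = {})
       \<and> (\<forall>i<k. \<forall>j<k. \<forall>a<(\<Sum>i<k. r i). \<forall>b<(\<Sum>i<k. r i). \<forall>c<(\<Sum>i<k. r i).
            i \<noteq> j \<and> joins (Ps a) (s i) (t i) \<and> joins (Ps b) (s i) (t i) \<and> joins (Ps c) (s j) (t j)
            \<and> inner (Ps a) \<noteq> {} \<and> inner (Ps b) \<noteq> {} \<and> inner (Ps c) \<noteq> {} \<longrightarrow>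
            \<not> lies_between (inner_union lp rp (Ps c)) (inner_union lp rp (Ps a)) (inner_union lp rp (Ps b)))"
proof -
  let ?L = "\<Sum>i<k. r i"
  have g: "graph V E" and ir: "interval_rep V E lp rp" using assms by auto
  have path: "\<And>a. a < ?L \<Longrightarrow> is_path V E (Ps a)" using assms(4) unfolding rip_solution_def by blast
  have mi: "mutually_induced E ?L Ps" using assms(4) unfolding rip_solution_def by blast
  have m1: "\<And>a b. a < ?L \<Longrightarrow> b < ?L \<Longrightarrow> a \<noteq> b \<Longrightarrow> set (Ps a) \<inter> set (Ps b) \<subseteq> ends (Ps a) \<inter> ends (Ps b)"
    using mi unfolding mutually_induced_def by blast
  have m2: "\<And>a b. a < ?L \<Longrightarrow> b < ?L \<Longrightarrow> a \<noteq> b \<Longrightarrow> \<forall>u\<in>inner (Ps a). \<forall>v\<in>set (Ps b). E u v \<longrightarrow> v \<in> ends (Ps a) \<inter> ends (Ps b)"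
    using mi unfolding mutually_induced_def by blast
  have ex: "\<exists>b<?L. joins (Ps b) (s j) (t j)" if j: "j < k" for j
  proof (rule ccontr)
    assume "\<not> ?thesis"
    hence "{a. a < ?L \<and> joins (Ps a) (s j) (t j)} = {}" by blast
    hence "card {a. a < ?L \<and> joins (Ps a) (s j) (t j)} = 0" by (simp only: card.empty)
    moreover have "card {a. a < ?L \<and> joins (Ps a) (s j) (t j)} = r j" using assms(4) j unfolding rip_solution_def by blast
    moreover have "0 < r j" using assms(3) j unfolding rip_instance_def by blast
    ultimately show False by linarith
  qed
  have P1: "inner_union lp rp (Ps a) \<inter> interval lp rp (s i) \<noteq> {} \<and>
            inner_union lp rp (Ps a) \<inter> interval lp rp (t i) \<noteq> {} \<and>
            (\<forall>v \<in> s ` {..<k} \<union> t ` {..<k}. v \<noteq> s i \<and> v \<noteq> t i \<longrightarrow>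
               inner_union lp rp (Ps a) \<inter> interval lp rp v = {})"
    if i: "i < k" and a: "a < ?L" and jn: "joins (Ps a) (s i) (t i)" and inn: "inner (Ps a) \<noteq> {}" for i a
  proof (intro conjI ballI impI)
    have en: "ends (Ps a) = {s i, t i}" using joins_ends[OF jn] .
    have hl: "{hd (Ps a), last (Ps a)} = {s i, t i}" using en unfolding ends_def .
    obtain u1 where u1: "u1 \<in> inner (Ps a)" "E (hd (Ps a)) u1" using inner_first path[OF a] inn by blast
    obtain u2 where u2: "u2 \<in> inner (Ps a)" "E u2 (last (Ps a))" using inner_last path[OF a] inn by blast
    have c1: "inner_union lp rp (Ps a) \<inter> interval lp rp (hd (Ps a)) \<noteq> {}"
      using int_ne[OF ir g u1(2)] u1(1) unfolding inner_union_def by blast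
    have c2: "inner_union lp rp (Ps a) \<inter> interval lp rp (last (Ps a)) \<noteq> {}"
      using int_ne[OF ir g u2(2)] u2(1) unfolding inner_union_def by blast
    have cc: "\<forall>w\<in>{hd (Ps a), last (Ps a)}. inner_union lp rp (Ps a) \<inter> interval lp rp w \<noteq> {}"
      using c1 c2 by blast
    have si: "s i \<in> {hd (Ps a), last (Ps a)}" "t i \<in> {hd (Ps a), last (Ps a)}" using hl by simp_all
    show "inner_union lp rp (Ps a) \<inter> interval lp rp (s i) \<noteq> {}"
      using cc si(1) by blast
    show "inner_union lp rp (Ps a) \<inter> interval lp rp (t i) \<noteq> {}"
      using cc si(2) by blast
    fix v assume v: "v \<in> s ` {..<k} \<union> t ` {..<k}" and nv: "v \<noteq> s i \<and> v \<noteq> t i"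
    obtain j where j: "j < k" "v = s j \<or> v = t j" using v by blast
    obtain b where b: "b < ?L" "joins (Ps b) (s j) (t j)" using ex[OF j(1)] by blast
    have vb: "v \<in> ends (Ps b)" using joins_ends[OF b(2)] j(2) by auto
    hence vs: "v \<in> set (Ps b)" using ends_sub[of "Ps b"] path[OF b(1)] unfolding is_path_def by blast
    have ve: "v \<notin> ends (Ps a)" using en nv by auto
    have ab: "a \<noteq> b" using vb ve by blast
    have "\<forall>u\<in>inner (Ps a). interval lp rp u \<inter> interval lp rp v = {}"
      using disj[OF g ir path[OF a] path[OF b(1)] m1[OF a b(1) ab] m2[OF a b(1) ab] _ vs ve] by blast
    thus "inner_union lp rp (Ps a) \<inter> interval lp rp v = {}" unfolding inner_union_def by blast
  qed
  have P2: "inner_union lp rp (Ps a) \<inter> inner_union lp rp (Ps b) = {}"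
    if a: "a < ?L" and b: "b < ?L" and ab: "a \<noteq> b" for a b
  proof -
    have "interval lp rp u \<inter> interval lp rp w = {}" if u: "u \<in> inner (Ps a)" and w: "w \<in> inner (Ps b)" for u w
    proof -
      have ws: "w \<in> set (Ps b)" using inner_sub[of "Ps b"] w by blast
      have wne: "w \<notin> ends (Ps b)" using inner_not_end[of "Ps b" w] path[OF b] w unfolding is_path_def by blast
      have "w \<notin> ends (Ps a)"
      proof
        assume "w \<in> ends (Ps a)"
        hence "w \<in> set (Ps a)" unfolding ends_def using path[OF a] unfolding is_path_def by auto
        thus False using m1[OF a b ab] ws wne by blast
      qed
      thus ?thesis using disj[OF g ir path[OF a] path[OF b] m1[OF a b ab] m2[OF a b ab] u ws] by blast
    qed
    thus ?thesis unfolding inner_union_def by blast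
  qed
  have P3: "\<not> lies_between (inner_union lp rp (Ps c)) (inner_union lp rp (Ps a)) (inner_union lp rp (Ps b))"
    if i: "i < k" and j: "j < k" and a: "a < ?L" and b: "b < ?L" and c: "c < ?L" and ij: "i \<noteq> j"
      and ja: "joins (Ps a) (s i) (t i)" and jb: "joins (Ps b) (s i) (t i)" and jc: "joins (Ps c) (s j) (t j)"
      and ia: "inner (Ps a) \<noteq> {}" and ib: "inner (Ps b) \<noteq> {}" and ic: "inner (Ps c) \<noteq> {}" for i j a b c
  proof
    assume lb: "lies_between (inner_union lp rp (Ps c)) (inner_union lp rp (Ps a)) (inner_union lp rp (Ps b))"
    let ?A = "inner_union lp rp (Ps a)" and ?B = "inner_union lp rp (Ps b)" and ?C = "inner_union lp rp (Ps c)"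
    obtain u where u: "u \<in> inner (Ps c)" using ic by blast
    have "u \<in> V" using u inner_sub[of "Ps c"] path[OF c] unfolding is_path_def by blast
    hence "lp u < rp u" using ir unfolding interval_rep_def by blast
    hence "real_of_int (lp u) \<in> interval lp rp u" unfolding interval_def by simp
    then obtain z where z: "z \<in> ?C" using u unfolding inner_union_def by blast
    have zb: "Sup ?A < z \<and> z < Inf ?B"
    proof -
      have bc: "bdd_above ?C" "bdd_below ?C" using bdd_iu[of lp rp "Ps c"] by simp_all
      have "Inf ?C \<le> z" by (rule cInf_lower[OF z bc(2)])
      moreover have "z \<le> Sup ?C" by (rule cSup_upper[OF z bc(1)])
      ultimately
      show ?thesis using lb unfolding lies_between_def by linarith
    qed
    have cov: "z \<in> interval lp rp w" if w: "w = s i \<or> w = t i" for w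
    proof -
      have "?A \<inter> interval lp rp w \<noteq> {}" "?B \<inter> interval lp rp w \<noteq> {}" using P1[OF i a ja ia] P1[OF i b jb ib] w by auto
      then obtain x y where x: "x \<in> ?A" "x \<in> interval lp rp w" and y: "y \<in> ?B" "y \<in> interval lp rp w" by blast
      have ba: "bdd_above ?A" using bdd_iu[of lp rp "Ps a"] by simp
      have bb: "bdd_below ?B" using bdd_iu[of lp rp "Ps b"] by simp
      have "x \<le> Sup ?A" by (rule cSup_upper[OF x(1) ba])
      moreover have "Inf ?B \<le> y" by (rule cInf_lower[OF y(1) bb])
      ultimately
      show ?thesis using x(2) y(2) zb unfolding interval_def by auto
    qed
    have "s i \<in> {s j, t j}"
    proof (rule ccontr)
      assume "s i \<notin> {s j, t j}"
      hence "?C \<inter> interval lp rp (s i) = {}" using P1[OF j c jc ic] i by auto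
      thus False using cov z by blast
    qed
    moreover have "t i \<in> {s j, t j}"
    proof (rule ccontr)
      assume "t i \<notin> {s j, t j}"
      hence "?C \<inter> interval lp rp (t i) = {}" using P1[OF j c jc ic] i by auto
      thus False using cov z by blast
    qed
    moreover have "s i \<noteq> t i" "s j \<noteq> t j" "{s i, t i} \<noteq> {s j, t j}" using assms(3) i j ij unfolding rip_instance_def by auto
    ultimately show False by auto
  qed
  show ?thesis
    apply (intro conjI)
      apply (intro allI impI, elim conjE, rule P1, assumption+)
     apply (intro allI impI, elim conjE, rule P2, assumption+)
    apply (intro allI impI)
    subgoal for i j a b c
      apply (elim conjE)
      apply (rule P3[of i j a b c])
                 apply assumption+
      done
    done
qed

end
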